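(* Let $G$ be a finite graph, let $(C,D)$ be an ordered partition of $V(G)$, let $c_0\in C$ and $d_0\in D$, and let $(V_1,\dots,V_k)$ be a $D$-twin partition of $C$. Then \[\mathrm{dist}_G(c_0,d_0)=\min_{i\in[k]}\bigl(\mathrm{dist}_G(c_0,V_i)+\mathrm{dist}_{G[V_i\cup D]}(V_i,d_0)\bigr).\]
   Context: An ordered partition of a set is a finite sequence of pairwise disjoint (possibly empty) subsets whose union is the set. For a partition $\{C,D\}$ of $V(G)$, a $D$-twin partition of $C$ is a partition $(V_1,\dots,V_k)$ of $C$ (parts may be empty) such that for each $i$ and all $u,v\in V_i$, $N_G(u)\cap D=N_G(v)\cap D$. $\mathrm{dist}_G$ is shortest-path distance ($\infty$ if no path); for sets, $\mathrm{dist}_G(U,x)=\min_{u\in U}\mathrm{dist}_G(u,x)$ with $\min\emptyset=\infty$. $G[W]$ denotes the induced subgraph. *)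

theory Defs
  imports Main "HOL-Library.Extended_Nat"
begin

definition finite_graph :: "'a set \<Rightarrow> ('a \<Rightarrow> 'a \<Rightarrow> bool) \<Rightarrow> bool" where
  "finite_graph V E \<longleftrightarrow> finite V \<and> (\<forall>u v. E u v \<longrightarrow> E v u) \<and> (\<forall>u. \<not> E u u)
     \<and> (\<forall>u v. E u v \<longrightarrow> u \<in> V \<and> v \<in> V)"

definition walk_in :: "'a set \<Rightarrow> ('a \<Rightarrow> 'a \<Rightarrow> bool) \<Rightarrow> 'a list \<Rightarrow> bool" where
  "walk_in W E xs \<longleftrightarrow> xs \<noteq> [] \<and> set xs \<subseteq> W \<and> (\<forall>i. Suc i < length xs \<longrightarrow> E (xs ! i) (xs ! Suc i))"

text \<open>Shortest-path distance in G[W] (infinity if no path).\<close>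

definition gdist :: "'a set \<Rightarrow> ('a \<Rightarrow> 'a \<Rightarrow> bool) \<Rightarrow> 'a \<Rightarrow> 'a \<Rightarrow> enat" where
  "gdist W E u v = Inf {enat (length xs - 1) | xs. walk_in W E xs \<and> hd xs = u \<and> last xs = v}"

text \<open>Distance in G[W] from a vertex set U to a vertex x (infinity if U is empty).\<close>

definition gsetdist :: "'a set \<Rightarrow> ('a \<Rightarrow> 'a \<Rightarrow> bool) \<Rightarrow> 'a set \<Rightarrow> 'a \<Rightarrow> enat" where
  "gsetdist W E U x = Inf {gdist W E u x | u. u \<in> U}"

end

theory Submission
  imports Defs
begin

lemma walk_rev:
  assumes "\<forall>u v. E u v \<longrightarrow> E v u" "walk_in W E xs"
  shows "walk_in W E (rev xs)"
  unfolding walk_in_def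
proof (intro conjI allI impI)
  show "rev xs \<noteq> []" "set (rev xs) \<subseteq> W" using assms(2) by (auto simp: walk_in_def)
  fix i assume i: "Suc i < length (rev xs)"
  have "E (xs ! (length xs - Suc (Suc i))) (xs ! Suc (length xs - Suc (Suc i)))"
    using assms(2) i by (auto simp: walk_in_def)
  moreover have "Suc (length xs - Suc (Suc i)) = length xs - Suc i" using i by simp
  ultimately show "E (rev xs ! i) (rev xs ! Suc i)" using i assms(1)
    by (auto simp: rev_nth)
qed

lemma walk_take:
  assumes "walk_in W E xs" "0 < n"
  shows "walk_in W E (take n xs)"
  using assms by (auto simp: walk_in_def dest: in_set_takeD)

lemma walk_drop:
  assumes "walk_in W E xs" "n < length xs"
  shows "walk_in W E (drop n xs)"
  using assms by (auto simp: walk_in_def dest: in_set_dropD)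

lemma walk_set:
  assumes "walk_in W E xs" "set xs \<subseteq> W'"
  shows "walk_in W' E xs"
  using assms by (auto simp: walk_in_def)

lemma walk_append:
  assumes "walk_in W E xs" "walk_in W E ys" "E (last xs) (hd ys)"
  shows "walk_in W E (xs @ ys)"
  unfolding walk_in_def
proof (intro conjI allI impI)
  show "xs @ ys \<noteq> []" "set (xs @ ys) \<subseteq> W" using assms by (auto simp: walk_in_def)
  fix i assume i: "Suc i < length (xs @ ys)"
  show "E ((xs @ ys) ! i) ((xs @ ys) ! Suc i)"
  proof (cases "Suc i < length xs")
    case True then show ?thesis using assms(1) by (auto simp: walk_in_def nth_append)
  next
    case False
    show ?thesis
    proof (cases "Suc i = length xs")
      case True
      then have "xs ! i = last xs" using assms(1)
        by (metis walk_in_def diff_Suc_1 last_conv_nth)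
      moreover have "ys ! 0 = hd ys" using assms(2) by (simp add: walk_in_def hd_conv_nth)
      ultimately show ?thesis using True assms(3) by (auto simp: nth_append)
    next
      case F2: False
      then have "Suc (i - length xs) < length ys" "Suc (i - length xs) = Suc i - length xs"
        using False i by auto
      moreover have "(xs @ ys) ! i = ys ! (i - length xs)" using False F2 by (simp add: nth_append)
      moreover have "(xs @ ys) ! Suc i = ys ! Suc (i - length xs)" using False F2
        by (simp add: nth_append Suc_diff_le)
      moreover have "E (ys ! (i - length xs)) (ys ! Suc (i - length xs))"
        using assms(2) \<open>Suc (i - length xs) < length ys\<close> unfolding walk_in_def by blast
      ultimately show ?thesis by metis
    qed
  qed
qed

lemma gdist_le:
  "walk_in W E xs \<Longrightarrow> hd xs = u \<Longrightarrow> last xs = v \<Longrightarrow> gdist W E u v \<le> enat (length xs - 1)"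
  unfolding gdist_def by (rule Inf_lower) blast

lemma gdist_attain:
  assumes "gdist W E u v \<noteq> \<infinity>"
  shows "\<exists>xs. walk_in W E xs \<and> hd xs = u \<and> last xs = v \<and> gdist W E u v = enat (length xs - 1)"
proof -
  let ?S = "{enat (length xs - 1) | xs. walk_in W E xs \<and> hd xs = u \<and> last xs = v}"
  have "?S \<noteq> {}" using assms unfolding gdist_def by (metis Inf_empty top_enat_def)
  then obtain y where "y \<in> ?S" by blast
  then have "Inf ?S \<in> ?S" unfolding Inf_enat_def using LeastI[of "\<lambda>x. x \<in> ?S" y] by auto
  then show ?thesis unfolding gdist_def by blast
qed

lemma gsetdist_le: "u \<in> U \<Longrightarrow> gsetdist W E U x \<le> gdist W E u x"
  unfolding gsetdist_def by (rule Inf_lower) blast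

lemma gsetdist_attain:
  assumes "gsetdist W E U x \<noteq> \<infinity>"
  shows "\<exists>u\<in>U. gsetdist W E U x = gdist W E u x"
proof -
  let ?S = "{gdist W E u x | u. u \<in> U}"
  have "?S \<noteq> {}" using assms unfolding gsetdist_def by (metis Inf_empty top_enat_def)
  then obtain y where "y \<in> ?S" by blast
  then have "Inf ?S \<in> ?S" unfolding Inf_enat_def using LeastI[of "\<lambda>x. x \<in> ?S" y] by auto
  then show ?thesis unfolding gsetdist_def by blast
qed

lemma last_index:
  assumes "xs \<noteq> []" "P (hd xs)" "\<not> P (last xs)"
  shows "\<exists>j. Suc j < length xs \<and> P (xs ! j) \<and> (\<forall>m. j < m \<and> m < length xs \<longrightarrow> \<not> P (xs ! m))"
proof -
  let ?M = "{m. m < length xs \<and> P (xs ! m)}"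
  define j where "j = Max ?M"
  have fin: "finite ?M" by simp
  have "0 \<in> ?M" using assms by (simp add: hd_conv_nth)
  then have jM: "j \<in> ?M" unfolding j_def using fin by (intro Max_in) auto
  have jmax: "\<forall>m. j < m \<and> m < length xs \<longrightarrow> \<not> P (xs ! m)"
    using fin j_def by (metis (mono_tags, lifting) Max_ge leD mem_Collect_eq)
  have "j \<noteq> length xs - 1" using jM assms by (metis last_conv_nth mem_Collect_eq)
  then have "Suc j < length xs" using jM by auto
  then show ?thesis using jM jmax by blast
qed

theorem lemma6p1:
  fixes V C D :: "'a set" and E :: "'a \<Rightarrow> 'a \<Rightarrow> bool"
    and k :: nat and Vs :: "nat \<Rightarrow> 'a set" and c0 d0 :: 'a
  assumes "finite_graph V E"
    and "C \<inter> D = {}" and "C \<union> D = V"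
    and "c0 \<in> C" and "d0 \<in> D"
    and "\<forall>i\<in>{1..k}. \<forall>j\<in>{1..k}. i \<noteq> j \<longrightarrow> Vs i \<inter> Vs j = {}"
    and "(\<Union>i\<in>{1..k}. Vs i) = C"
    and "\<forall>i\<in>{1..k}. \<forall>u\<in>Vs i. \<forall>v\<in>Vs i. {w\<in>D. E u w} = {w\<in>D. E v w}"
  shows "gdist V E c0 d0 =
           Min ((\<lambda>i. gsetdist V E (Vs i) c0 + gsetdist (Vs i \<union> D) E (Vs i) d0) ` {1..k})"
proof -
  define f where "f i = gsetdist V E (Vs i) c0 + gsetdist (Vs i \<union> D) E (Vs i) d0" for i
  have sym: "\<forall>u v. E u v \<longrightarrow> E v u" using assms(1) by (simp add: finite_graph_def)
  have ne: "{1..k} \<noteq> {}" using assms(4,7) by auto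
  have upper: "gdist V E c0 d0 \<le> f i" if i: "i \<in> {1..k}" for i
  proof (cases "f i = \<infinity>")
    case True then show ?thesis by simp
  next
    case False
    then have a: "gsetdist V E (Vs i) c0 \<noteq> \<infinity>" and b: "gsetdist (Vs i \<union> D) E (Vs i) d0 \<noteq> \<infinity>"
      unfolding f_def by (auto simp: plus_eq_infty_iff_enat)
    obtain u where u: "u \<in> Vs i" "gsetdist V E (Vs i) c0 = gdist V E u c0"
      using gsetdist_attain[OF a] by blast
    obtain u' where u': "u' \<in> Vs i" "gsetdist (Vs i \<union> D) E (Vs i) d0 = gdist (Vs i \<union> D) E u' d0"
      using gsetdist_attain[OF b] by blast
    obtain p where p: "walk_in V E p" "hd p = u" "last p = c0" "gdist V E u c0 = enat (length p - 1)"
      using gdist_attain a u by metis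
    obtain q where q: "walk_in (Vs i \<union> D) E q" "hd q = u'" "last q = d0"
      "gdist (Vs i \<union> D) E u' d0 = enat (length q - 1)"
      using gdist_attain b u' by metis
    have VsC: "Vs i \<subseteq> C" using assms(7) i by blast
    have d0n: "d0 \<notin> Vs i" using VsC assms(2,5) by blast
    obtain j where j: "Suc j < length q" "q ! j \<in> Vs i"
      "\<forall>m. j < m \<and> m < length q \<longrightarrow> q ! m \<notin> Vs i"
      using last_index[of q "\<lambda>x. x \<in> Vs i"] q u' d0n by (auto simp: walk_in_def)
    have "q ! Suc j \<notin> Vs i" using j by blast
    moreover have "q ! Suc j \<in> set q" using j(1) by simp
    ultimately have qj1: "q ! Suc j \<in> D" using q(1) by (auto simp: walk_in_def)
    have "E (q ! j) (q ! Suc j)" using j q(1) by (auto simp: walk_in_def)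
    then have Euq: "E u (q ! Suc j)" using assms(8) i u(1) j(2) qj1 by blast
    define r where "r = rev p @ drop (Suc j) q"
    have w1: "walk_in V E (rev p)" using walk_rev[OF sym p(1)] .
    have w2: "walk_in V E (drop (Suc j) q)"
      using walk_drop[OF q(1) j(1)] walk_set VsC assms(3) by (metis Un_mono order_refl subset_trans walk_in_def)
    have hdq: "hd (drop (Suc j) q) = q ! Suc j" using j(1) by (simp add: hd_drop_conv_nth)
    have lastp: "last (rev p) = u" using p by (simp add: last_rev walk_in_def)
    have wr: "walk_in V E r" unfolding r_def using walk_append[OF w1 w2] Euq hdq lastp by simp
    have "hd r = c0" using p(1,3) by (simp add: r_def hd_rev walk_in_def)
    moreover have "last r = d0" using q(3) j(1) by (simp add: r_def)
    ultimately have "gdist V E c0 d0 \<le> enat (length r - 1)" using gdist_le[OF wr] by blast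
    also have "length r - 1 \<le> (length p - 1) + (length q - 1)"
      using j(1) p(1) by (auto simp: r_def walk_in_def)
    finally show ?thesis unfolding f_def using u(2) u'(2) p(4) q(4)
      by (metis order_trans plus_enat_simps(1) enat_ord_simps(1))
  qed
  have lower: "\<exists>i\<in>{1..k}. f i \<le> gdist V E c0 d0"
  proof (cases "gdist V E c0 d0 = \<infinity>")
    case True then show ?thesis using ne by auto
  next
    case False
    obtain xs where xs: "walk_in V E xs" "hd xs = c0" "last xs = d0" "gdist V E c0 d0 = enat (length xs - 1)"
      using gdist_attain[OF False] by blast
    have d0n: "d0 \<notin> C" using assms(2,5) by blast
    obtain j where j: "Suc j < length xs" "xs ! j \<in> C"
      "\<forall>m. j < m \<and> m < length xs \<longrightarrow> xs ! m \<notin> C"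
      using last_index[of xs "\<lambda>x. x \<in> C"] xs assms(4) d0n by (auto simp: walk_in_def)
    obtain i where i: "i \<in> {1..k}" "xs ! j \<in> Vs i" using j(2) assms(7) by blast
    let ?w = "xs ! j"
    have t1: "walk_in V E (rev (take (Suc j) xs))" using walk_rev[OF sym walk_take[OF xs(1)]] by simp
    have "hd (rev (take (Suc j) xs)) = ?w" using j(1) by (simp add: hd_rev take_Suc_conv_app_nth)
    moreover have "last (rev (take (Suc j) xs)) = c0" using xs(2) j(1)
      by (simp add: last_rev hd_take)
    ultimately have g1: "gdist V E ?w c0 \<le> enat j" using gdist_le[OF t1] j(1) by fastforce
    have sd: "set (drop j xs) \<subseteq> Vs i \<union> D"
    proof
      fix x assume "x \<in> set (drop j xs)"
      then obtain m where m: "m < length xs - j" "x = drop j xs ! m" by (metis in_set_conv_nth length_drop)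
      then have x: "x = xs ! (j + m)" using j(1) by simp
      have "x \<in> V" using xs(1) m x by (auto simp: walk_in_def)
      show "x \<in> Vs i \<union> D"
      proof (cases "m = 0")
        case True then show ?thesis using x i by simp
      next
        case False then have "x \<notin> C" using j(3) x m by auto
        then show ?thesis using \<open>x \<in> V\<close> assms(3) by blast
      qed
    qed
    have t2: "walk_in (Vs i \<union> D) E (drop j xs)" using walk_set[OF walk_drop[OF xs(1)] sd] j(1) by simp
    have "hd (drop j xs) = ?w" using j(1) by (simp add: hd_drop_conv_nth)
    moreover have "last (drop j xs) = d0" using xs(3) j(1) by simp
    ultimately have g2: "gdist (Vs i \<union> D) E ?w d0 \<le> enat (length xs - 1 - j)"
      using gdist_le[OF t2] by fastforce
    have "f i \<le> enat j + enat (length xs - 1 - j)" unfolding f_def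
      using add_mono[OF order_trans[OF gsetdist_le[OF i(2)] g1] order_trans[OF gsetdist_le[OF i(2)] g2]] .
    also have "\<dots> = gdist V E c0 d0" using xs(4) j(1) by simp
    finally show ?thesis using i(1) by blast
  qed
  have fin: "finite (f ` {1..k})" by simp
  show ?thesis unfolding f_def[symmetric]
  proof (rule antisym)
    obtain i where "i \<in> {1..k}" "f i = Min (f ` {1..k})" using Min_in[OF fin] ne by (metis image_is_empty imageE)
    then show "gdist V E c0 d0 \<le> Min (f ` {1..k})" using upper by metis
    from lower obtain i where "i \<in> {1..k}" "f i \<le> gdist V E c0 d0" by blast
    then show "Min (f ` {1..k}) \<le> gdist V E c0 d0" using fin by (meson Min_le image_eqI order_trans)
  qed
qed

end
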